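(* Let $f$ be a perfect $2$-coloring of $H(n,q)$ with quotient matrix $\begin{pmatrix} a & b\\ c& d\end{pmatrix}$. If there exists a $1$-perfect code in $H(q+1,q)$, then there exists a perfect $2q$-coloring of $H(qn,q)$ with quotient matrix $T=(t_{i,j})_{i,j=1}^{2q}$, where $t_{i,j}=a$ for $i,j\le q$, $t_{i,j}=b$ for $i\le q<j$, $t_{i,j}=c$ for $j\le q<i$, and $t_{i,j}=d$ for $i,j>q$.
   Context: The Hamming graph $H(n,q)$ has vertex set $\mathbb{Z}_q^n$, two vertices adjacent iff they differ in exactly one coordinate. A perfect $k$-coloring is a surjective map from the vertex set onto $\{1,\dots,k\}$ such that every vertex of color $i$ has exactly $s_{i,j}$ neighbours of color $j$ (depending only on $i,j$); $(s_{i,j})$ is its quotient matrix. A $1$-perfect code in $H(n,q)$ is a set $C$ of vertices such that every radius-$1$ Hamming ball contains exactly one element of $C$. *)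

theory Defs
  imports Main
begin

text \<open>Vertices of H(n,q): words of length n over {0..q-1}, represented extensionally
  as functions nat => nat that vanish outside {0..<n}.\<close>
definition ham_vertices :: "nat \<Rightarrow> nat \<Rightarrow> (nat \<Rightarrow> nat) set" where
  "ham_vertices n q = {x. (\<forall>i<n. x i < q) \<and> (\<forall>i\<ge>n. x i = 0)}"

definition ham_dist :: "nat \<Rightarrow> (nat \<Rightarrow> nat) \<Rightarrow> (nat \<Rightarrow> nat) \<Rightarrow> nat" where
  "ham_dist n x y = card {i. i < n \<and> x i \<noteq> y i}"

definition ham_adj :: "nat \<Rightarrow> (nat \<Rightarrow> nat) \<Rightarrow> (nat \<Rightarrow> nat) \<Rightarrow> bool" where
  "ham_adj n x y \<longleftrightarrow> ham_dist n x y = 1"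

definition perfect_coloring ::
  "nat \<Rightarrow> nat \<Rightarrow> nat \<Rightarrow> ((nat \<Rightarrow> nat) \<Rightarrow> nat) \<Rightarrow> (nat \<Rightarrow> nat \<Rightarrow> nat) \<Rightarrow> bool" where
  "perfect_coloring n q k f S \<longleftrightarrow>
     f ` ham_vertices n q = {1..k} \<and>
     (\<forall>x\<in>ham_vertices n q. \<forall>j\<in>{1..k}.
        card {y\<in>ham_vertices n q. ham_adj n x y \<and> f y = j} = S (f x) j)"

definition one_perfect_code :: "nat \<Rightarrow> nat \<Rightarrow> (nat \<Rightarrow> nat) set \<Rightarrow> bool" where
  "one_perfect_code n q C \<longleftrightarrow> C \<subseteq> ham_vertices n q \<and>
     (\<forall>x\<in>ham_vertices n q. card {c\<in>C. ham_dist n x c \<le> 1} = 1)"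

end

theory Submission
  imports Defs "HOL-Library.FuncSet"
begin


lemma dist_sym: "ham_dist m x y = ham_dist m y x"
  unfolding ham_dist_def by (metis)

lemma dist1_iff: "ham_dist m x y = 1 \<longleftrightarrow> (\<exists>i<m. x i \<noteq> y i \<and> (\<forall>k<m. k \<noteq> i \<longrightarrow> x k = y k))"
proof
  assume "ham_dist m x y = 1"
  then obtain i where i: "{k. k < m \<and> x k \<noteq> y k} = {i}"
    unfolding ham_dist_def by (metis card_1_singleton_iff One_nat_def)
  then show "\<exists>i<m. x i \<noteq> y i \<and> (\<forall>k<m. k \<noteq> i \<longrightarrow> x k = y k)" by blast
next
  assume "\<exists>i<m. x i \<noteq> y i \<and> (\<forall>k<m. k \<noteq> i \<longrightarrow> x k = y k)"
  then obtain i where "i<m" "x i \<noteq> y i" "\<forall>k<m. k \<noteq> i \<longrightarrow> x k = y k" by blast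
  then have "{k. k < m \<and> x k \<noteq> y k} = {i}" by blast
  then show "ham_dist m x y = 1" unfolding ham_dist_def by simp
qed

lemma dist_le1: "(\<And>k. k<m \<Longrightarrow> k \<noteq> i \<Longrightarrow> x k = y k) \<Longrightarrow> ham_dist m x y \<le> 1"
proof -
  assume h: "\<And>k. k<m \<Longrightarrow> k \<noteq> i \<Longrightarrow> x k = y k"
  have "{k. k < m \<and> x k \<noteq> y k} \<subseteq> {i}" using h by blast
  then have "card {k. k < m \<and> x k \<noteq> y k} \<le> card {i}" by (intro card_mono) auto
  then show ?thesis unfolding ham_dist_def by simp
qed

lemma dist_le1_D: "ham_dist m x y \<le> 1 \<Longrightarrow> i<m \<Longrightarrow> x i \<noteq> y i \<Longrightarrow> k<m \<Longrightarrow> k \<noteq> i \<Longrightarrow> x k = y k"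
proof (rule ccontr)
  assume a: "ham_dist m x y \<le> 1" "i<m" "x i \<noteq> y i" "k<m" "k \<noteq> i" "x k \<noteq> y k"
  have "{i,k} \<subseteq> {k. k < m \<and> x k \<noteq> y k}" using a by auto
  then have "card {i,k} \<le> card {k. k < m \<and> x k \<noteq> y k}" by (intro card_mono) auto
  then show False using a unfolding ham_dist_def by simp
qed

lemma V_bij: "bij_betw (\<lambda>x. restrict x {..<m}) (ham_vertices m q) (PiE {..<m} (\<lambda>_. {..<q}))"
proof (rule bij_betwI')
  fix x y assume "x \<in> ham_vertices m q" "y \<in> ham_vertices m q"
  note xy = this
  show "(restrict x {..<m} = restrict y {..<m}) = (x = y)"
  proof
    assume h: "restrict x {..<m} = restrict y {..<m}"
    show "x = y"
    proof
      fix i show "x i = y i"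
      proof (cases "i<m")
        case True then show ?thesis using fun_cong[OF h, of i] by simp
      next
        case False then show ?thesis using xy unfolding ham_vertices_def by simp
      qed
    qed
  qed simp
next
  fix x assume "x \<in> ham_vertices m q"
  then show "restrict x {..<m} \<in> PiE {..<m} (\<lambda>_. {..<q})" unfolding ham_vertices_def by auto
next
  fix f assume f: "f \<in> PiE {..<m} (\<lambda>_. {..<q})"
  let ?x = "\<lambda>i. if i < m then f i else 0"
  have "?x \<in> ham_vertices m q" using f unfolding ham_vertices_def by auto
  moreover have "f = restrict ?x {..<m}"
  proof
    fix i show "f i = restrict ?x {..<m} i" using f PiE_arb[OF f, of i] by (cases "i<m") auto
  qed
  ultimately show "\<exists>x\<in>ham_vertices m q. f = restrict x {..<m}" by blast
qed

lemma card_V: "card (ham_vertices m q) = q ^ m"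
  using bij_betw_same_card[OF V_bij] by (simp add: card_PiE)


lemma finite_V': "finite (ham_vertices m q)"
  using bij_betw_finite[OF V_bij] by (simp add: finite_PiE)

lemma card_ball:
  assumes x: "x \<in> ham_vertices m q"
  shows "card {y\<in>ham_vertices m q. ham_dist m x y \<le> 1} = 1 + m * (q - 1)"
proof -
  let ?Sig = "Sigma {..<m} (\<lambda>i. {..<q} - {x i})"
  let ?h = "\<lambda>(i,a). x(i := a)"
  have eq: "{y\<in>ham_vertices m q. ham_dist m x y \<le> 1} = insert x (?h ` ?Sig)"
  proof (intro equalityI subsetI)
    fix y assume y: "y \<in> {y\<in>ham_vertices m q. ham_dist m x y \<le> 1}"
    show "y \<in> insert x (?h ` ?Sig)"
    proof (cases "y = x")
      case False
      then have "\<exists>i. x i \<noteq> y i" by (auto simp: fun_eq_iff) metis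
      then obtain i where i: "x i \<noteq> y i" by blast
      have im: "i < m"
      proof (rule ccontr)
        assume "\<not> i < m"
        then have "x i = 0" "y i = 0" using x y unfolding ham_vertices_def by auto
        then show False using i by simp
      qed
      have yV: "y \<in> ham_vertices m q" and dl: "ham_dist m x y \<le> 1" using y by auto
      have yeq: "y = x(i := y i)"
      proof
        fix k show "y k = (x(i := y i)) k"
        proof (cases "k = i")
          case False
          show ?thesis
          proof (cases "k < m")
            case True then show ?thesis using dist_le1_D[OF dl im i True False] False by simp
          next
            case nm: False then show ?thesis using x yV False unfolding ham_vertices_def by simp
          qed
        qed simp
      qed
      have "(i, y i) \<in> ?Sig" using im i y unfolding ham_vertices_def by auto
      then have "?h (i, y i) \<in> ?h ` ?Sig" by (rule imageI)
      then have "x(i := y i) \<in> ?h ` ?Sig" by simp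
      then show ?thesis by (subst yeq) (rule insertI2)
    qed simp
  next
    fix y assume "y \<in> insert x (?h ` ?Sig)"
    then show "y \<in> {y\<in>ham_vertices m q. ham_dist m x y \<le> 1}"
    proof
      assume "y = x" then show ?thesis using x by (simp add: ham_dist_def)
    next
      assume "y \<in> ?h ` ?Sig"
      then obtain i a where ia: "i < m" "a < q" "y = x(i := a)" by auto
      have "ham_dist m x y \<le> 1" by (rule dist_le1[of m i]) (simp add: ia(3))
      moreover have "y \<in> ham_vertices m q" using x ia unfolding ham_vertices_def by auto
      ultimately show ?thesis by simp
    qed
  qed
  have inj: "inj_on ?h ?Sig"
  proof (rule inj_onI)
    fix p p' assume p: "p \<in> ?Sig" "p' \<in> ?Sig" "?h p = ?h p'"
    obtain i a where ia: "p = (i,a)" by (cases p)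
    obtain i' a' where ia': "p' = (i',a')" by (cases p')
    have e: "x(i := a) = x(i' := a')" using p ia ia' by simp
    have ne: "a \<noteq> x i" "a' \<noteq> x i'" using p ia ia' by auto
    have "i = i'"
    proof (rule ccontr)
      assume "i \<noteq> i'"
      then have "(x(i := a)) i = x i" using fun_cong[OF e, of i] by simp
      then show False using ne by simp
    qed
    moreover have "a = a'" using fun_cong[OF e, of i] \<open>i = i'\<close> by simp
    ultimately show "p = p'" using ia ia' by simp
  qed
  have nx: "x \<notin> ?h ` ?Sig"
  proof
    assume "x \<in> ?h ` ?Sig"
    then obtain i a where h: "a \<noteq> x i" "x = x(i := a)" by auto
    have "x i = (x(i := a)) i" using h(2) by (rule fun_cong)
    then show False using h(1) by simp
  qed
  have cs: "card ?Sig = m * (q - 1)"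
  proof -
    have "card ?Sig = (\<Sum>i<m. card ({..<q} - {x i}))" by (simp add: card_SigmaI)
    also have "\<dots> = (\<Sum>i<m. q - 1)"
      using x unfolding ham_vertices_def by (intro sum.cong) auto
    finally show ?thesis by simp
  qed
  show ?thesis unfolding eq using nx inj cs card_image[OF inj]
    by (simp add: finite_imageI)
qed




lemma M1: fixes a b q u u' :: nat shows "a<q \<Longrightarrow> u<q \<Longrightarrow> (a+q-u) mod q = (if u \<le> a then a-u else a+q-u)"
proof (cases "u \<le> a")
  case True
  assume "a<q" "u<q"
  then have e: "a+q-u = (a-u) + q" using True by arith
  have e2: "(a+q-u) mod q = ((a-u)+q) mod q" using e by (rule arg_cong)
  also have "\<dots> = a - u" using \<open>a<q\<close> by simp
  finally show ?thesis using True by simp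
next
  case False
  assume "a<q" "u<q"
  then show ?thesis using False by simp
qed

lemma M2: fixes a b q u u' :: nat shows "b<q \<Longrightarrow> u<q \<Longrightarrow> ((b+u) mod q + q - u) mod q = b"
proof -
  assume h: "b<q" "u<q"
  show ?thesis
  proof (cases "b + u < q")
    case True then show ?thesis using h by simp
  next
    case False
    then have "(b+u) mod q = b + u - q" using h by (simp add: le_mod_geq)
    then show ?thesis using h False M1[of "b+u-q" q u] by simp
  qed
qed

lemma M3: fixes a b q u u' :: nat shows "a<q \<Longrightarrow> u<q \<Longrightarrow> ((a+q-u) mod q + u) mod q = a"
proof -
  assume h: "a<q" "u<q"
  show ?thesis
  proof (cases "u \<le> a")
    case True
    then have "(a+q-u) mod q = a - u" using h M1[of a q u] by simp
    moreover have "a - u + u = a" using True by arith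
    ultimately show ?thesis using h by simp
  next
    case False
    then have e: "a + q - u + u = a + q" using h by arith
    show ?thesis using h False M1[of a q u] by (simp add: e)
  qed
qed

lemma M4: fixes a b q u u' :: nat shows "a<q \<Longrightarrow> b<q \<Longrightarrow> (a + q - (a + q - b) mod q) mod q = b"
proof -
  assume h: "a<q" "b<q"
  show ?thesis
  proof (cases "b \<le> a")
    case True
    then have e: "a + q - (a - b) = b + q" using h by arith
    show ?thesis using h True M1[of a q b] by (simp add: e)
  next
    case False
    then have e: "a + q - (a + q - b) = b" using h by arith
    show ?thesis using h False M1[of a q b] by (simp add: e)
  qed
qed

lemma M_inj1: fixes a b q u u' :: nat shows "a<q \<Longrightarrow> u<q \<Longrightarrow> u'<q \<Longrightarrow> (a+q-u) mod q = (a+q-u') mod q \<Longrightarrow> u = u'"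
  using M1[of a q u] M1[of a q u'] by (cases "u \<le> a"; cases "u' \<le> a"; simp; arith)

lemma M_inj2: fixes a b q u u' :: nat shows "a<q \<Longrightarrow> b<q \<Longrightarrow> u<q \<Longrightarrow> (a+q-u) mod q = (b+q-u) mod q \<Longrightarrow> a = b"
  using M1[of a q u] M1[of b q u] by (cases "u \<le> a"; cases "u \<le> b"; simp; arith)

lemma card1_eq: "card A = 1 \<Longrightarrow> a \<in> A \<Longrightarrow> b \<in> A \<Longrightarrow> a = b"
  by (metis One_nat_def card_1_singleton_iff singletonD)

definition cw :: "nat \<Rightarrow> nat \<Rightarrow> nat \<Rightarrow> (nat \<Rightarrow> nat) \<Rightarrow> (nat \<Rightarrow> nat)" where
  "cw q u v x = (\<lambda>k. if k = 0 then (x 0 + q - u) mod q else if k < q then x k else if k = q then v else 0)"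

definition PhiProps :: "nat \<Rightarrow> ((nat \<Rightarrow> nat) \<Rightarrow> nat \<times> nat) \<Rightarrow> bool" where
  "PhiProps q \<phi> \<longleftrightarrow>
    (\<forall>x\<in>ham_vertices q q. fst (\<phi> x) < q \<and> snd (\<phi> x) < q) \<and>
    (\<forall>x\<in>ham_vertices q q. \<forall>y\<in>ham_vertices q q. ham_adj q x y \<longrightarrow> fst (\<phi> x) \<noteq> fst (\<phi> y)) \<and>
    (\<forall>x\<in>ham_vertices q q. \<forall>u'<q. \<forall>v'<q. u' \<noteq> fst (\<phi> x) \<longrightarrow>
        (\<exists>!y. y \<in> ham_vertices q q \<and> ham_adj q x y \<and> \<phi> y = (u',v')))"

context
  fixes q :: nat and C
  assumes q2: "q \<ge> 2" and PC: "one_perfect_code (q+1) q C"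
begin

lemma CV: "C \<subseteq> ham_vertices (q+1) q" using PC unfolding one_perfect_code_def by simp

lemma Ccard: "z \<in> ham_vertices (q+1) q \<Longrightarrow> card {c\<in>C. ham_dist (q+1) z c \<le> 1} = 1"
  using PC unfolding one_perfect_code_def by simp

lemma Cex: "z \<in> ham_vertices (q+1) q \<Longrightarrow> \<exists>c\<in>C. ham_dist (q+1) z c \<le> 1"
proof -
  assume "z \<in> ham_vertices (q+1) q"
  then have "card {c\<in>C. ham_dist (q+1) z c \<le> 1} = 1" by (rule Ccard)
  then obtain c where "{c\<in>C. ham_dist (q+1) z c \<le> 1} = {c}" using card_1_singleton_iff[of "{c\<in>C. ham_dist (q+1) z c \<le> 1}"] by auto
  then show ?thesis by blast
qed

lemma Cuniq: "z \<in> ham_vertices (q+1) q \<Longrightarrow> c \<in> C \<Longrightarrow> c' \<in> C \<Longrightarrow> ham_dist (q+1) z c \<le> 1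
   \<Longrightarrow> ham_dist (q+1) z c' \<le> 1 \<Longrightarrow> c = c'"
  using card1_eq[OF Ccard] by blast

lemma Mid:
  assumes c: "c \<in> C" and c': "c' \<in> C" and i: "i \<le> q" and j: "j \<le> q"
    and agree: "\<And>k. k \<noteq> i \<Longrightarrow> k \<noteq> j \<Longrightarrow> c k = c' k"
  shows "c = c'"
proof -
  define z where "z = c(i := c' i)"
  have cV: "c \<in> ham_vertices (q+1) q" and c'V: "c' \<in> ham_vertices (q+1) q" using c c' CV by auto
  have zV: "z \<in> ham_vertices (q+1) q" using cV c'V i unfolding z_def ham_vertices_def by auto
  have d1: "ham_dist (q+1) z c \<le> 1" by (rule dist_le1[of _ i]) (simp add: z_def)
  have d2: "ham_dist (q+1) z c' \<le> 1"
  proof (rule dist_le1[of _ j])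
    fix k assume "k < q+1" "k \<noteq> j"
    then show "z k = c' k" using agree[of k] unfolding z_def by (cases "k = i") auto
  qed
  show ?thesis using Cuniq[OF zV c c' d1 d2] .
qed

lemma q0: "q > 0" using q2 by simp

lemma cwV: "x \<in> ham_vertices q q \<Longrightarrow> v < q \<Longrightarrow> cw q u v x \<in> ham_vertices (q+1) q"
  using q0 unfolding ham_vertices_def cw_def by auto

lemma cw_inj: "x \<in> ham_vertices q q \<Longrightarrow> y \<in> ham_vertices q q \<Longrightarrow> u < q \<Longrightarrow> cw q u v x = cw q u v' y \<Longrightarrow> x = y"
proof -
  assume x: "x \<in> ham_vertices q q" and y: "y \<in> ham_vertices q q" and u: "u < q" and e: "cw q u v x = cw q u v' y"
  show "x = y"
  proof
    fix k
    have ek: "cw q u v x k = cw q u v' y k" using e by simp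
    show "x k = y k"
    proof (cases "k = 0")
      case True
      have "(x 0 + q - u) mod q = (y 0 + q - u) mod q" using ek True unfolding cw_def by simp
      then show ?thesis using M_inj2[of "x 0" q "y 0" u] x y u q0 True unfolding ham_vertices_def by auto
    next
      case False
      show ?thesis
      proof (cases "k < q")
        case True then show ?thesis using ek False unfolding cw_def by simp
      next
        case nk: False then show ?thesis using x y unfolding ham_vertices_def by simp
      qed
    qed
  qed
qed

lemma cw_agree: "(\<And>k. k<q \<Longrightarrow> k \<noteq> i \<Longrightarrow> x k = y k) \<Longrightarrow> k \<noteq> i \<Longrightarrow> cw q u v x k = cw q u v y k"
  using q0 unfolding cw_def by auto

lemma card_C: "card C = q ^ (q - 1)"
proof -
  let ?V = "ham_vertices (q+1) q"
  let ?B = "\<lambda>c. {y\<in>?V. ham_dist (q+1) c y \<le> 1}"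
  have fC: "finite C" using CV finite_V' finite_subset by blast
  have eq: "?V = (\<Union>c\<in>C. ?B c)"
  proof (intro equalityI subsetI)
    fix y assume y: "y \<in> ?V"
    then obtain c where "c \<in> C" "ham_dist (q+1) y c \<le> 1" using Cex by blast
    then show "y \<in> (\<Union>c\<in>C. ?B c)" using y dist_sym[of "q+1" y c] by auto
  qed auto
  have disj: "\<forall>c\<in>C. \<forall>c'\<in>C. c \<noteq> c' \<longrightarrow> ?B c \<inter> ?B c' = {}"
  proof (intro ballI impI)
    fix c c' assume "c \<in> C" "c' \<in> C" "c \<noteq> c'"
    show "?B c \<inter> ?B c' = {}"
    proof (rule ccontr)
      assume "?B c \<inter> ?B c' \<noteq> {}"
      then obtain y where "y \<in> ?V" "ham_dist (q+1) c y \<le> 1" "ham_dist (q+1) c' y \<le> 1" by auto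
      then show False using Cuniq[of y c c'] \<open>c \<in> C\<close> \<open>c' \<in> C\<close> \<open>c \<noteq> c'\<close>
        dist_sym[of "q+1" c y] dist_sym[of "q+1" c' y] by auto
    qed
  qed
  have sq: "1 + (q+1)*(q-1) = q^2"
  proof -
    obtain r where "q = Suc r" using q0 by (cases q) auto
    then show ?thesis by (simp add: power2_eq_square algebra_simps)
  qed
  have "card ?V = card (\<Union>c\<in>C. ?B c)" by (rule arg_cong[OF eq])
  also have "\<dots> = (\<Sum>c\<in>C. card (?B c))"
    by (rule card_UN_disjoint[OF fC]) (use disj finite_V' in auto)
  also have "\<dots> = (\<Sum>c\<in>C. q^2)"
    by (rule sum.cong) (use CV card_ball sq in auto)
  finally have "q^(q+1) = card C * q^2" using card_V by simp
  moreover have "q^(q+1) = q^(q-1) * q^2" using q0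
    by (simp add: power_add[symmetric]) 
  ultimately show ?thesis using q0 by simp
qed

end



context
  fixes q :: nat and C
  assumes q2: "q \<ge> 2" and PC: "one_perfect_code (q+1) q C"
begin

lemmas Mid' = Mid[OF q2 PC] and CV' = CV[OF q2 PC] and Cex' = Cex[OF q2 PC] and Cuniq' = Cuniq[OF q2 PC]
  and q0' = q0[OF q2 PC] and cwV' = cwV[OF q2 PC] and cw_inj' = cw_inj[OF q2 PC]
  and cw_agree' = cw_agree[OF q2 PC] and card_C' = card_C[OF q2 PC]

definition pr :: "(nat \<Rightarrow> nat) \<Rightarrow> (nat \<Rightarrow> nat)" where
  "pr c = (\<lambda>i. if i < q - 1 then c (Suc i) else 0)"

lemma pr_onto: "pr ` C = ham_vertices (q - 1) q"
proof -
  have sub: "pr ` C \<subseteq> ham_vertices (q - 1) q"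
    using CV' unfolding pr_def ham_vertices_def by auto
  have inj: "inj_on pr C"
  proof (rule inj_onI)
    fix c c' assume c: "c \<in> C" and c': "c' \<in> C" and e: "pr c = pr c'"
    show "c = c'"
    proof (rule Mid'[OF c c', of 0 q])
      fix k assume k: "k \<noteq> 0" "k \<noteq> q"
      show "c k = c' k"
      proof (cases "k < q")
        case True
        have h: "pr c (k - 1) = pr c' (k - 1)" using e by simp
        have a1: "k - 1 < q - 1" and a2: "Suc (k - 1) = k" using True k by arith+
        have "pr c (k - 1) = c k" unfolding pr_def using a1 a2 by simp
        moreover have "pr c' (k - 1) = c' k" unfolding pr_def using a1 a2 by simp
        ultimately show ?thesis using h by simp
      next
        case False
        then have kq: "k \<ge> q + 1" using k by arith
        have "c \<in> ham_vertices (q+1) q" "c' \<in> ham_vertices (q+1) q" using c c' CV' by auto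
        then show ?thesis using kq unfolding ham_vertices_def by auto
      qed
    qed auto
  qed
  have fin: "finite (ham_vertices (q - 1) q)" by (rule finite_V')
  have "card (pr ` C) = card (ham_vertices (q - 1) q)"
    using card_image[OF inj] card_C' card_V by simp
  then show ?thesis using card_subset_eq[OF fin sub] by simp
qed

lemma exists_uv: "x \<in> ham_vertices q q \<Longrightarrow> \<exists>u v. u < q \<and> v < q \<and> cw q u v x \<in> C"
proof -
  assume x: "x \<in> ham_vertices q q"
  let ?w = "\<lambda>i. if i < q - 1 then x (Suc i) else 0"
  have "?w \<in> ham_vertices (q - 1) q" using x unfolding ham_vertices_def by auto
  then have "?w \<in> pr ` C" unfolding pr_onto .
  then obtain c where c: "c \<in> C" "pr c = ?w" by auto
  have cV: "c \<in> ham_vertices (q+1) q" using c CV' by auto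
  define u where "u = (x 0 + q - c 0) mod q"
  have "cw q u (c q) x = c"
  proof
    fix k show "cw q u (c q) x k = c k"
    proof (cases "k = 0")
      case True
      have "x 0 < q" "c 0 < q" using x cV q0' unfolding ham_vertices_def by auto
      then show ?thesis using True M4[of "x 0" q "c 0"] unfolding cw_def u_def by simp
    next
      case False
      show ?thesis
      proof (cases "k < q")
        case True
        have a1: "k - 1 < q - 1" and a2: "Suc (k - 1) = k" using True False by arith+
        have "pr c (k - 1) = x k" using c(2) a1 a2 by simp
        moreover have "pr c (k - 1) = c k" unfolding pr_def using a1 a2 by simp
        ultimately show ?thesis using True False unfolding cw_def by simp
      next
        case nk: False
        then show ?thesis using False cV unfolding cw_def ham_vertices_def by auto
      qed
    qed
  qed
  moreover have "u < q" using q0' unfolding u_def by simp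
  moreover have "c q < q" using cV unfolding ham_vertices_def by auto
  ultimately show ?thesis using c(1) by metis
qed

lemma cw_uniq: "x \<in> ham_vertices q q \<Longrightarrow> u < q \<Longrightarrow> u' < q \<Longrightarrow> cw q u v x \<in> C \<Longrightarrow> cw q u' v' x \<in> C
   \<Longrightarrow> u = u' \<and> v = v'"
proof -
  assume x: "x \<in> ham_vertices q q" and u: "u < q" "u' < q" and c: "cw q u v x \<in> C" "cw q u' v' x \<in> C"
  have e: "cw q u v x = cw q u' v' x"
    by (rule Mid'[OF c, of 0 q]) (auto simp: cw_def)
  have "cw q u v x q = cw q u' v' x q" using e by simp
  then have "v = v'" unfolding cw_def using q0' by simp
  have "cw q u v x 0 = cw q u' v' x 0" using e by simp
  then have "(x 0 + q - u) mod q = (x 0 + q - u') mod q" unfolding cw_def by simp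
  then have "u = u'" using M_inj1[of "x 0" q u u'] u x q0' unfolding ham_vertices_def by auto
  then show ?thesis using \<open>v = v'\<close> by simp
qed

definition phi :: "(nat \<Rightarrow> nat) \<Rightarrow> nat \<times> nat" where
  "phi x = (SOME p. fst p < q \<and> snd p < q \<and> cw q (fst p) (snd p) x \<in> C)"

lemma phi_char: "x \<in> ham_vertices q q \<Longrightarrow> phi x = (u, v) \<longleftrightarrow> u < q \<and> v < q \<and> cw q u v x \<in> C"
proof -
  assume x: "x \<in> ham_vertices q q"
  have ex: "\<exists>p. fst p < q \<and> snd p < q \<and> cw q (fst p) (snd p) x \<in> C" using exists_uv[OF x] by auto
  have P: "fst (phi x) < q \<and> snd (phi x) < q \<and> cw q (fst (phi x)) (snd (phi x)) x \<in> C"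
    unfolding phi_def by (rule someI_ex[OF ex])
  show ?thesis
  proof
    assume "phi x = (u, v)" then show "u < q \<and> v < q \<and> cw q u v x \<in> C" using P by simp
  next
    assume h: "u < q \<and> v < q \<and> cw q u v x \<in> C"
    then have "fst (phi x) = u \<and> snd (phi x) = v" using cw_uniq[OF x] P by blast
    then show "phi x = (u, v)" by (simp add: prod_eq_iff)
  qed
qed

lemma phiV: "x \<in> ham_vertices q q \<Longrightarrow> fst (phi x) < q \<and> snd (phi x) < q \<and> cw q (fst (phi x)) (snd (phi x)) x \<in> C"
  using phi_char[of x "fst (phi x)" "snd (phi x)"] by simp

lemma phiB: "x \<in> ham_vertices q q \<Longrightarrow> y \<in> ham_vertices q q \<Longrightarrow> ham_adj q x y \<Longrightarrow> fst (phi x) \<noteq> fst (phi y)"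
proof
  assume x: "x \<in> ham_vertices q q" and y: "y \<in> ham_vertices q q" and a: "ham_adj q x y"
    and e: "fst (phi x) = fst (phi y)"
  obtain i where i: "i < q" "x i \<noteq> y i" "\<forall>k<q. k \<noteq> i \<longrightarrow> x k = y k"
    using a unfolding ham_adj_def dist1_iff by blast
  let ?u = "fst (phi x)"
  have c1: "cw q ?u (snd (phi x)) x \<in> C" using phiV[OF x] by simp
  have c2: "cw q ?u (snd (phi y)) y \<in> C" using phiV[OF y] e by simp
  have "cw q ?u (snd (phi x)) x = cw q ?u (snd (phi y)) y"
  proof (rule Mid'[OF c1 c2, of i q])
    fix k assume k: "k \<noteq> i" "k \<noteq> q"
    show "cw q ?u (snd (phi x)) x k = cw q ?u (snd (phi y)) y k"
      using i k q0' x y unfolding cw_def ham_vertices_def by auto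
  qed (use i in auto)
  then have "x = y" using cw_inj'[OF x y] phiV[OF x] by blast
  then show False using i by simp
qed

lemma phiC_ex:
  assumes x: "x \<in> ham_vertices q q" and u': "u' < q" and v': "v' < q" and ne: "u' \<noteq> fst (phi x)"
  shows "\<exists>y. y \<in> ham_vertices q q \<and> ham_adj q x y \<and> phi y = (u',v')"
proof -
  let ?u = "fst (phi x)" and ?v = "snd (phi x)"
  have cx: "cw q ?u ?v x \<in> C" and uq: "?u < q" using phiV[OF x] by auto
  have x0: "x 0 < q" using x q0' unfolding ham_vertices_def by auto
  define z where "z = cw q u' v' x"
  have zV: "z \<in> ham_vertices (q+1) q" unfolding z_def by (rule cwV'[OF x v'])
  obtain c where c: "c \<in> C" "ham_dist (q+1) z c \<le> 1" using Cex'[OF zV] by blast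
  have cV: "c \<in> ham_vertices (q+1) q" using c CV' by auto
  have "\<exists>i<q. z i \<noteq> c i"
  proof (rule ccontr)
    assume "\<not> (\<exists>i<q. z i \<noteq> c i)"
    then have agr: "\<forall>i<q. z i = c i" by auto
    have "c = cw q ?u ?v x"
    proof (rule Mid'[OF c(1) cx, of 0 q])
      fix k assume k: "k \<noteq> 0" "k \<noteq> q"
      show "c k = cw q ?u ?v x k"
      proof (cases "k < q")
        case True then show ?thesis using agr k unfolding z_def cw_def by auto
      next
        case False then show ?thesis using cV k unfolding cw_def ham_vertices_def by auto
      qed
    qed auto
    then have "c 0 = cw q ?u ?v x 0" by simp
    moreover have "z 0 = c 0" using agr q0' by auto
    ultimately have "(x 0 + q - u') mod q = (x 0 + q - ?u) mod q" unfolding z_def cw_def by simp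
    then have "u' = ?u" using M_inj1[OF x0 u' uq] by simp
    then show False using ne by simp
  qed
  then obtain i where i: "i < q" "z i \<noteq> c i" by blast
  have agr: "\<And>k. k < q+1 \<Longrightarrow> k \<noteq> i \<Longrightarrow> z k = c k"
    using dist_le1_D[OF c(2), of i] i by simp
  have cq: "c q = v'" using agr[of q] i unfolding z_def cw_def by simp
  have c0: "c 0 < q" using cV unfolding ham_vertices_def by auto
  define y where "y = (\<lambda>k. if k = 0 then (c 0 + u') mod q else if k < q then c k else 0)"
  have yV: "y \<in> ham_vertices q q" using cV q0' unfolding y_def ham_vertices_def by auto
  have cwy: "cw q u' v' y = c"
  proof
    fix k show "cw q u' v' y k = c k"
    proof (cases "k = 0")
      case True then show ?thesis using M2[OF c0 u'] unfolding cw_def y_def by simp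
    next
      case False
      then show ?thesis using cq cV unfolding cw_def y_def ham_vertices_def by auto
    qed
  qed
  have py: "phi y = (u', v')" using phi_char[OF yV] u' v' cwy c(1) by simp
  have "ham_adj q x y" unfolding ham_adj_def dist1_iff
  proof (intro exI conjI allI impI)
    show "i < q" by (rule i(1))
    show "x i \<noteq> y i"
    proof (cases "i = 0")
      case True
      show ?thesis
      proof
        assume "x i = y i"
        then have "x 0 = (c 0 + u') mod q" using True unfolding y_def by simp
        then have "(x 0 + q - u') mod q = c 0" using M2[OF c0 u'] by simp
        then show False using i True unfolding z_def cw_def by simp
      qed
    next
      case False
      then show ?thesis using i unfolding z_def cw_def y_def by simp
    qed
  next
    fix k assume k: "k < q" "k \<noteq> i"
    show "x k = y k"
    proof (cases "k = 0")
      case True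
      have "c 0 = (x 0 + q - u') mod q" using agr[of 0] k True unfolding z_def cw_def by simp
      then show ?thesis using True M3[OF x0 u'] unfolding y_def by simp
    next
      case False
      then show ?thesis using agr[of k] k unfolding z_def cw_def y_def by simp
    qed
  qed
  then show ?thesis using yV py by blast
qed

lemma phiC_uniq:
  assumes x: "x \<in> ham_vertices q q" and u': "u' < q"
    and y1: "y1 \<in> ham_vertices q q" "ham_adj q x y1" "phi y1 = (u',v')"
    and y2: "y2 \<in> ham_vertices q q" "ham_adj q x y2" "phi y2 = (u',v')"
  shows "y1 = y2"
proof -
  have v': "v' < q" using phiV[OF y1(1)] y1(3) by simp
  define z where "z = cw q u' v' x"
  have zV: "z \<in> ham_vertices (q+1) q" unfolding z_def by (rule cwV'[OF x v'])
  have c1: "cw q u' v' y1 \<in> C" using phiV[OF y1(1)] y1(3) by simp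
  have c2: "cw q u' v' y2 \<in> C" using phiV[OF y2(1)] y2(3) by simp
  obtain i1 where i1: "\<forall>k<q. k \<noteq> i1 \<longrightarrow> x k = y1 k"
    using y1(2) unfolding ham_adj_def dist1_iff by blast
  obtain i2 where i2: "\<forall>k<q. k \<noteq> i2 \<longrightarrow> x k = y2 k"
    using y2(2) unfolding ham_adj_def dist1_iff by blast
  have d1: "ham_dist (q+1) z (cw q u' v' y1) \<le> 1"
    by (rule dist_le1[of _ i1]) (unfold z_def, rule cw_agree', use i1 in auto)
  have d2: "ham_dist (q+1) z (cw q u' v' y2) \<le> 1"
    by (rule dist_le1[of _ i2]) (unfold z_def, rule cw_agree', use i2 in auto)
  have "cw q u' v' y1 = cw q u' v' y2" by (rule Cuniq'[OF zV c1 c2 d1 d2])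
  then show ?thesis using cw_inj'[OF y1(1) y2(1) u'] by blast
qed

lemma phi_props: "PhiProps q phi"
  unfolding PhiProps_def
proof (intro conjI ballI allI impI)
  fix x assume "x \<in> ham_vertices q q"
  then show "fst (phi x) < q" "snd (phi x) < q" using phiV by auto
next
  fix x y assume "x \<in> ham_vertices q q" "y \<in> ham_vertices q q" "ham_adj q x y"
  then show "fst (phi x) \<noteq> fst (phi y)" by (rule phiB)
next
  fix x u' v' assume "x \<in> ham_vertices q q" "u' < q" "v' < q" "u' \<noteq> fst (phi x)"
  then show "\<exists>!y. y \<in> ham_vertices q q \<and> ham_adj q x y \<and> phi y = (u', v')"
    using phiC_ex phiC_uniq by blast
qed

end

lemma phi_exists: "q \<ge> 2 \<Longrightarrow> one_perfect_code (q+1) q C \<Longrightarrow> \<exists>\<phi>. PhiProps q \<phi>"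
  using phi_props by blast




definition blk :: "nat \<Rightarrow> (nat \<Rightarrow> nat) \<Rightarrow> nat \<Rightarrow> (nat \<Rightarrow> nat)" where
  "blk q x k = (\<lambda>i. if i < q then x (k*q + i) else 0)"

definition asm :: "nat \<Rightarrow> nat \<Rightarrow> (nat \<Rightarrow> nat \<Rightarrow> nat) \<Rightarrow> (nat \<Rightarrow> nat)" where
  "asm q n B = (\<lambda>p. if p < q*n then B (p div q) (p mod q) else 0)"

lemma idx_lt: fixes k i q n :: nat shows "k < n \<Longrightarrow> i < q \<Longrightarrow> k*q + i < q*n"
proof -
  assume "k < n" "i < q"
  then have "k*q + i < Suc k * q" by simp
  also have "\<dots> \<le> n * q" using \<open>k < n\<close> by (intro mult_le_mono1) simp
  finally show ?thesis by (simp add: mult.commute)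
qed

lemma idx_div: fixes k i q :: nat shows "i < q \<Longrightarrow> (k*q + i) div q = k"
  by simp

lemma idx_mod: fixes k i q :: nat shows "i < q \<Longrightarrow> (k*q + i) mod q = i"
  by simp

lemma blkV: "x \<in> ham_vertices (q*n) q \<Longrightarrow> k < n \<Longrightarrow> blk q x k \<in> ham_vertices q q"
  unfolding blk_def ham_vertices_def using idx_lt by auto

lemma asm_blk: "x \<in> ham_vertices (q*n) q \<Longrightarrow> asm q n (blk q x) = x"
proof
  fix p assume x: "x \<in> ham_vertices (q*n) q"
  show "asm q n (blk q x) p = x p"
  proof (cases "p < q*n")
    case True
    then have q0: "q > 0" by (cases q) auto
    have "(p div q) * q + p mod q = p" by simp
    then show ?thesis using True q0 unfolding asm_def blk_def by simp
  next
    case False then show ?thesis using x unfolding asm_def ham_vertices_def by simp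
  qed
qed

lemma asmV: "(\<And>k. k < n \<Longrightarrow> B k \<in> ham_vertices q q) \<Longrightarrow> asm q n B \<in> ham_vertices (q*n) q"
proof -
  assume h: "\<And>k. k < n \<Longrightarrow> B k \<in> ham_vertices q q"
  have "\<And>p. p < q*n \<Longrightarrow> B (p div q) (p mod q) < q"
  proof -
    fix p assume p: "p < q*n"
    then have q0: "q > 0" by (cases q) auto
    have "p div q < n" using p less_mult_imp_div_less[of p n q] by (simp add: mult.commute)
    then show "B (p div q) (p mod q) < q" using h q0 unfolding ham_vertices_def by auto
  qed
  then show ?thesis unfolding asm_def ham_vertices_def by auto
qed

lemma blk_asm: "(\<And>k. k < n \<Longrightarrow> B k \<in> ham_vertices q q) \<Longrightarrow> k < n \<Longrightarrow> blk q (asm q n B) k = B k"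
proof
  fix i assume h: "\<And>k. k < n \<Longrightarrow> B k \<in> ham_vertices q q" and k: "k < n"
  show "blk q (asm q n B) k i = B k i"
  proof (cases "i < q")
    case True
    then show ?thesis using idx_lt[OF k True] unfolding blk_def asm_def by simp
  next
    case False then show ?thesis using h[OF k] unfolding blk_def ham_vertices_def by simp
  qed
qed

lemma blockdist:
  assumes k: "k < n" and agr: "\<And>k'. k' < n \<Longrightarrow> k' \<noteq> k \<Longrightarrow> B k' = B' k'"
  shows "ham_dist (q*n) (asm q n B) (asm q n B') = ham_dist q (B k) (B' k)"
proof -
  have eq: "{p. p < q*n \<and> asm q n B p \<noteq> asm q n B' p} = (\<lambda>i. k*q + i) ` {i. i < q \<and> B k i \<noteq> B' k i}"
  proof (intro equalityI subsetI)
    fix p assume p: "p \<in> {p. p < q*n \<and> asm q n B p \<noteq> asm q n B' p}"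
    then have pl: "p < q*n" and d: "B (p div q) (p mod q) \<noteq> B' (p div q) (p mod q)"
      unfolding asm_def by auto
    then have q0: "q > 0" by (cases q) auto
    have dn: "p div q < n" using pl less_mult_imp_div_less[of p n q] by (simp add: mult.commute)
    have dk: "p div q = k" using agr[OF dn] d by metis
    have "p = k*q + p mod q" using div_mult_mod_eq[of p q] dk by simp
    moreover have "p mod q < q" using q0 by simp
    ultimately show "p \<in> (\<lambda>i. k*q + i) ` {i. i < q \<and> B k i \<noteq> B' k i}" using d dk by blast
  next
    fix p assume "p \<in> (\<lambda>i. k*q + i) ` {i. i < q \<and> B k i \<noteq> B' k i}"
    then obtain i where i: "i < q" "B k i \<noteq> B' k i" "p = k*q + i" by auto
    then show "p \<in> {p. p < q*n \<and> asm q n B p \<noteq> asm q n B' p}"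
      using idx_lt[OF k i(1)] unfolding asm_def by simp
  qed
  have "inj_on (\<lambda>i. k*q + i) {i. i < q \<and> B k i \<noteq> B' k i}" by (rule inj_onI) simp
  then show ?thesis unfolding ham_dist_def eq by (simp add: card_image)
qed

lemma adj_block:
  assumes x: "x \<in> ham_vertices (q*n) q" and y: "y \<in> ham_vertices (q*n) q" and a: "ham_adj (q*n) x y"
  shows "\<exists>k<n. (\<forall>k'<n. k' \<noteq> k \<longrightarrow> blk q y k' = blk q x k') \<and> ham_adj q (blk q x k) (blk q y k)"
proof -
  obtain p where p: "p < q*n" "x p \<noteq> y p" "\<forall>k<q*n. k \<noteq> p \<longrightarrow> x k = y k"
    using a unfolding ham_adj_def dist1_iff by blast
  have q0: "q > 0" using p(1) by (cases q) auto
  define k where "k = p div q"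
  have kn: "k < n" using p(1) less_mult_imp_div_less[of p n q] unfolding k_def by (simp add: mult.commute)
  have oth: "\<forall>k'<n. k' \<noteq> k \<longrightarrow> blk q y k' = blk q x k'"
  proof (intro allI impI)
    fix k' assume k': "k' < n" "k' \<noteq> k"
    show "blk q y k' = blk q x k'"
    proof
      fix i show "blk q y k' i = blk q x k' i"
      proof (cases "i < q")
        case True
        have "k'*q + i \<noteq> p" using k' True unfolding k_def by auto
        then show ?thesis using p(3) idx_lt[OF k'(1) True] True unfolding blk_def by simp
      qed (simp add: blk_def)
    qed
  qed
  have "ham_dist (q*n) (asm q n (blk q x)) (asm q n (blk q y)) = ham_dist q (blk q x k) (blk q y k)"
    by (rule blockdist[OF kn]) (use oth in auto)
  then have "ham_dist q (blk q x k) (blk q y k) = 1"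
    using a asm_blk[OF x] asm_blk[OF y] unfolding ham_adj_def by simp
  then show ?thesis using kn oth unfolding ham_adj_def by blast
qed

lemma blk_eq_imp: "x \<in> ham_vertices (q*n) q \<Longrightarrow> y \<in> ham_vertices (q*n) q \<Longrightarrow> (\<And>k. k < n \<Longrightarrow> blk q x k = blk q y k) \<Longrightarrow> x = y"
proof -
  assume x: "x \<in> ham_vertices (q*n) q" and y: "y \<in> ham_vertices (q*n) q" and h: "\<And>k. k < n \<Longrightarrow> blk q x k = blk q y k"
  have "asm q n (blk q x) = asm q n (blk q y)"
  proof
    fix p show "asm q n (blk q x) p = asm q n (blk q y) p"
    proof (cases "p < q*n")
      case True
      have "p div q < n" using True less_mult_imp_div_less[of p n q] by (simp add: mult.commute)
      then show ?thesis using True h unfolding asm_def by simp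
    qed (simp add: asm_def)
  qed
  then show ?thesis using asm_blk[OF x] asm_blk[OF y] by simp
qed

lemma mod_cancel_add: fixes a b r q :: nat
  shows "a < q \<Longrightarrow> b < q \<Longrightarrow> (a + r) mod q = (b + r) mod q \<Longrightarrow> a = b"
proof -
  assume h: "a < q" "b < q" "(a + r) mod q = (b + r) mod q"
  then have q0: "q > 0" by simp
  have "(a + r mod q) mod q = (b + r mod q) mod q" using h(3) by (simp add: mod_add_right_eq)
  then have "((a + r mod q) mod q + q - r mod q) mod q = ((b + r mod q) mod q + q - r mod q) mod q" by simp
  then show "a = b" using M2[OF h(1), of "r mod q"] M2[OF h(2), of "r mod q"] q0 by simp
qed

lemma mod_fix: fixes t R q :: nat shows "t < q \<Longrightarrow> ((t + q - R mod q) mod q + R) mod q = t"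
proof -
  assume t: "t < q"
  then have q0: "q > 0" by simp
  have "((t + q - R mod q) mod q + R) mod q = ((t + q - R mod q) mod q + R mod q) mod q"
    by (simp add: mod_add_right_eq)
  also have "\<dots> = t" using M3[OF t, of "R mod q"] q0 by simp
  finally show ?thesis .
qed




context
  fixes q n :: nat and \<phi> :: "(nat \<Rightarrow> nat) \<Rightarrow> nat \<times> nat" and f :: "(nat \<Rightarrow> nat) \<Rightarrow> nat" and S :: "nat \<Rightarrow> nat \<Rightarrow> nat"
  assumes q2: "q \<ge> 2" and n0: "n > 0" and PP: "PhiProps q \<phi>" and PF: "perfect_coloring n q 2 f S"
begin

lemma P1: "x \<in> ham_vertices q q \<Longrightarrow> fst (\<phi> x) < q \<and> snd (\<phi> x) < q"
  using PP unfolding PhiProps_def by blast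

lemma P2: "x \<in> ham_vertices q q \<Longrightarrow> y \<in> ham_vertices q q \<Longrightarrow> ham_adj q x y \<Longrightarrow> fst (\<phi> x) \<noteq> fst (\<phi> y)"
  using PP unfolding PhiProps_def by blast

lemma P3: "x \<in> ham_vertices q q \<Longrightarrow> u' < q \<Longrightarrow> v' < q \<Longrightarrow> u' \<noteq> fst (\<phi> x) \<Longrightarrow>
   \<exists>!y. y \<in> ham_vertices q q \<and> ham_adj q x y \<and> \<phi> y = (u',v')"
  using PP unfolding PhiProps_def by blast

lemma qpos: "q > 0" using q2 by simp

definition Uw :: "(nat \<Rightarrow> nat) \<Rightarrow> (nat \<Rightarrow> nat)" where
  "Uw x = (\<lambda>k. if k < n then fst (\<phi> (blk q x k)) else 0)"

definition sv :: "(nat \<Rightarrow> nat) \<Rightarrow> nat" where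
  "sv x = (\<Sum>k<n. snd (\<phi> (blk q x k))) mod q"

definition gg :: "(nat \<Rightarrow> nat) \<Rightarrow> nat" where
  "gg x = (if f (Uw x) = 1 then sv x + 1 else q + sv x + 1)"

definition jf :: "nat \<Rightarrow> nat" where "jf j = (if j \<le> q then 1 else 2)"
definition jt :: "nat \<Rightarrow> nat" where "jt j = (if j \<le> q then j - 1 else j - q - 1)"

lemma UwV: "x \<in> ham_vertices (q*n) q \<Longrightarrow> Uw x \<in> ham_vertices n q"
  unfolding Uw_def ham_vertices_def using P1 blkV by (auto simp: ham_vertices_def)

lemma fim: "f ` ham_vertices n q = {1..2}" using PF unfolding perfect_coloring_def by simp

lemma fval: "w \<in> ham_vertices n q \<Longrightarrow> f w = 1 \<or> f w = 2"
proof -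
  assume "w \<in> ham_vertices n q"
  then have "f w \<in> {1..2}" using fim by blast
  then show ?thesis by auto
qed

lemma fcount: "w \<in> ham_vertices n q \<Longrightarrow> j \<in> {1..2} \<Longrightarrow>
   card {y\<in>ham_vertices n q. ham_adj n w y \<and> f y = j} = S (f w) j"
  using PF unfolding perfect_coloring_def by blast

lemma sv_lt: "sv x < q" unfolding sv_def using qpos by simp

lemma gg_iff: "y \<in> ham_vertices (q*n) q \<Longrightarrow> j \<in> {1..2*q} \<Longrightarrow> gg y = j \<longleftrightarrow> f (Uw y) = jf j \<and> sv y = jt j"
proof -
  assume y: "y \<in> ham_vertices (q*n) q" and j: "j \<in> {1..2*q}"
  have fv: "f (Uw y) = 1 \<or> f (Uw y) = 2" using fval[OF UwV[OF y]] .
  have s: "sv y < q" by (rule sv_lt)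
  show ?thesis using fv s j unfolding gg_def jf_def jt_def by auto
qed

lemma gg_range: "x \<in> ham_vertices (q*n) q \<Longrightarrow> gg x \<in> {1..2*q}"
  using sv_lt[of x] unfolding gg_def by auto

lemma adj_U:
  assumes x: "x \<in> ham_vertices (q*n) q" and y: "y \<in> ham_vertices (q*n) q" and a: "ham_adj (q*n) x y"
  shows "\<exists>k<n. (\<forall>k'<n. k' \<noteq> k \<longrightarrow> blk q y k' = blk q x k') \<and> ham_adj q (blk q x k) (blk q y k)
     \<and> Uw y k \<noteq> Uw x k \<and> (\<forall>k'. k' \<noteq> k \<longrightarrow> Uw y k' = Uw x k') \<and> ham_adj n (Uw x) (Uw y)"
proof -
  obtain k where k: "k < n" "\<forall>k'<n. k' \<noteq> k \<longrightarrow> blk q y k' = blk q x k'" "ham_adj q (blk q x k) (blk q y k)"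
    using adj_block[OF x y a] by blast
  have ne: "Uw y k \<noteq> Uw x k"
    using P2[OF blkV[OF x k(1)] blkV[OF y k(1)] k(3)] k(1) unfolding Uw_def by simp
  have oth: "\<forall>k'. k' \<noteq> k \<longrightarrow> Uw y k' = Uw x k'" using k(2) unfolding Uw_def by simp
  have "ham_adj n (Uw x) (Uw y)" unfolding ham_adj_def dist1_iff using k(1) ne oth by metis
  then show ?thesis using k ne oth by blast
qed

lemma sum_split: fixes h :: "nat \<Rightarrow> nat" shows "k < n \<Longrightarrow> (\<Sum>k'<n. h k') = h k + (\<Sum>k'\<in>{..<n}-{k}. h k')"
  by (simp add: sum.remove)

lemma count_main:
  assumes x: "x \<in> ham_vertices (q*n) q" and j: "j \<in> {1..2*q}"
  shows "card {y\<in>ham_vertices (q*n) q. ham_adj (q*n) x y \<and> gg y = j} = S (f (Uw x)) (jf j)"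
proof -
  let ?V = "ham_vertices (q*n) q"
  let ?A = "{y\<in>?V. ham_adj (q*n) x y \<and> f (Uw y) = jf j \<and> sv y = jt j}"
  let ?B = "{w\<in>ham_vertices n q. ham_adj n (Uw x) w \<and> f w = jf j}"
  have AA: "{y\<in>?V. ham_adj (q*n) x y \<and> gg y = j} = ?A" using gg_iff[OF _ j] by blast
  have jtq: "jt j < q" using j unfolding jt_def by auto
  have inj: "inj_on Uw ?A"
  proof (rule inj_onI)
    fix y1 y2 assume y1: "y1 \<in> ?A" and y2: "y2 \<in> ?A" and e: "Uw y1 = Uw y2"
    have y1V: "y1 \<in> ?V" and y2V: "y2 \<in> ?V" using y1 y2 by auto
    obtain k1 where k1: "k1 < n" "\<forall>k'<n. k' \<noteq> k1 \<longrightarrow> blk q y1 k' = blk q x k'" "ham_adj q (blk q x k1) (blk q y1 k1)"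
       "Uw y1 k1 \<noteq> Uw x k1" "\<forall>k'. k' \<noteq> k1 \<longrightarrow> Uw y1 k' = Uw x k'"
      using adj_U[OF x y1V] y1 by blast
    obtain k2 where k2: "k2 < n" "\<forall>k'<n. k' \<noteq> k2 \<longrightarrow> blk q y2 k' = blk q x k'" "ham_adj q (blk q x k2) (blk q y2 k2)"
       "Uw y2 k2 \<noteq> Uw x k2" "\<forall>k'. k' \<noteq> k2 \<longrightarrow> Uw y2 k' = Uw x k'"
      using adj_U[OF x y2V] y2 by blast
    have kk: "k1 = k2"
    proof (rule ccontr)
      assume "k1 \<noteq> k2"
      then have "Uw y2 k1 = Uw x k1" using k2(5) by simp
      then show False using k1(4) e by simp
    qed
    define R where "R = (\<Sum>k'\<in>{..<n}-{k1}. snd (\<phi> (blk q x k')))"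
    have s1: "(\<Sum>k'<n. snd (\<phi> (blk q y1 k'))) = snd (\<phi> (blk q y1 k1)) + R"
      unfolding R_def sum_split[OF k1(1)] using k1(2) by (auto intro!: sum.cong)
    have s2: "(\<Sum>k'<n. snd (\<phi> (blk q y2 k'))) = snd (\<phi> (blk q y2 k1)) + R"
      unfolding R_def sum_split[OF k1(1)] using k2(2) kk by (auto intro!: sum.cong)
    have b1V: "blk q y1 k1 \<in> ham_vertices q q" using blkV[OF y1V k1(1)] .
    have b2V: "blk q y2 k1 \<in> ham_vertices q q" using blkV[OF y2V k1(1)] .
    have bxV: "blk q x k1 \<in> ham_vertices q q" using blkV[OF x k1(1)] .
    have "sv y1 = sv y2" using y1 y2 by simp
    then have "(snd (\<phi> (blk q y1 k1)) + R) mod q = (snd (\<phi> (blk q y2 k1)) + R) mod q"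
      unfolding sv_def s1 s2 .
    then have sndeq: "snd (\<phi> (blk q y1 k1)) = snd (\<phi> (blk q y2 k1))"
      using mod_cancel_add P1[OF b1V] P1[OF b2V] by blast
    have "Uw y1 k1 = Uw y2 k1" using e by simp
    then have fsteq: "fst (\<phi> (blk q y1 k1)) = fst (\<phi> (blk q y2 k1))" using k1(1) unfolding Uw_def by simp
    have peq: "\<phi> (blk q y2 k1) = \<phi> (blk q y1 k1)" using sndeq fsteq by (simp add: prod_eq_iff)
    have ne: "fst (\<phi> (blk q y1 k1)) \<noteq> fst (\<phi> (blk q x k1))" using P2[OF bxV b1V k1(3)] by simp
    have ex1: "\<exists>!y. y \<in> ham_vertices q q \<and> ham_adj q (blk q x k1) y \<and> \<phi> y = (fst (\<phi> (blk q y1 k1)), snd (\<phi> (blk q y1 k1)))"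
      using P3[OF bxV _ _ ne] P1[OF b1V] by blast
    have "blk q y1 k1 = blk q y2 k1"
      using ex1 b1V b2V k1(3) k2(3) kk peq by (auto simp: prod_eq_iff)
    then have "\<And>k. k < n \<Longrightarrow> blk q y1 k = blk q y2 k" using k1(2) k2(2) kk by metis
    then show "y1 = y2" using blk_eq_imp[OF y1V y2V] by blast
  qed
  have img: "Uw ` ?A = ?B"
  proof (intro equalityI subsetI)
    fix w assume "w \<in> Uw ` ?A"
    then obtain y where y: "y \<in> ?A" "w = Uw y" by blast
    then have yV: "y \<in> ?V" by simp
    obtain k where "k < n" "ham_adj n (Uw x) (Uw y)" using adj_U[OF x yV] y by blast
    then show "w \<in> ?B" using y UwV[OF yV] by simp
  next
    fix w assume w: "w \<in> ?B"
    then have wV: "w \<in> ham_vertices n q" and wa: "ham_adj n (Uw x) w" and wf: "f w = jf j" by auto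
    obtain k where k: "k < n" "Uw x k \<noteq> w k" "\<forall>k'<n. k' \<noteq> k \<longrightarrow> Uw x k' = w k'"
      using wa unfolding ham_adj_def dist1_iff by blast
    have bxV: "blk q x k \<in> ham_vertices q q" using blkV[OF x k(1)] .
    define R where "R = (\<Sum>k'\<in>{..<n}-{k}. snd (\<phi> (blk q x k')))"
    define v' where "v' = (jt j + q - R mod q) mod q"
    have v'q: "v' < q" unfolding v'_def using qpos by simp
    have wkq: "w k < q" using wV k(1) unfolding ham_vertices_def by simp
    have ne: "w k \<noteq> fst (\<phi> (blk q x k))" using k(1,2) unfolding Uw_def by simp
    obtain b where b: "b \<in> ham_vertices q q" "ham_adj q (blk q x k) b" "\<phi> b = (w k, v')"
      using P3[OF bxV wkq v'q ne] by blast
    define B' where "B' = (\<lambda>k'. if k' = k then b else blk q x k')"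
    have B'V: "\<And>k'. k' < n \<Longrightarrow> B' k' \<in> ham_vertices q q" unfolding B'_def using b(1) blkV[OF x] by simp
    define y where "y = asm q n B'"
    have yV: "y \<in> ?V" unfolding y_def by (rule asmV[OF B'V])
    have bY: "\<And>k'. k' < n \<Longrightarrow> blk q y k' = B' k'" unfolding y_def by (rule blk_asm[OF B'V])
    have "ham_dist (q*n) (asm q n (blk q x)) (asm q n B') = ham_dist q (blk q x k) (B' k)"
      by (rule blockdist[OF k(1)]) (simp add: B'_def)
    then have adj: "ham_adj (q*n) x y" using b(2) asm_blk[OF x] unfolding y_def ham_adj_def B'_def by simp
    have Uy: "Uw y = w"
    proof
      fix k' show "Uw y k' = w k'"
      proof (cases "k' < n")
        case True
        show ?thesis
        proof (cases "k' = k")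
          case True then show ?thesis using bY[OF k(1)] b(3) k(1) unfolding Uw_def B'_def by simp
        next
          case False
          then have "Uw y k' = Uw x k'" using bY[OF \<open>k' < n\<close>] \<open>k' < n\<close> unfolding Uw_def B'_def by simp
          then show ?thesis using k(3) False \<open>k' < n\<close> by simp
        qed
      next
        case False then show ?thesis using wV unfolding Uw_def ham_vertices_def by simp
      qed
    qed
    have "(\<Sum>k'<n. snd (\<phi> (blk q y k'))) = snd (\<phi> (blk q y k)) + R"
      unfolding R_def sum_split[OF k(1)] using bY unfolding B'_def by (auto intro!: sum.cong)
    also have "snd (\<phi> (blk q y k)) = v'" using bY[OF k(1)] b(3) unfolding B'_def by simp
    finally have "sv y = (v' + R) mod q" unfolding sv_def by simp
    also have "\<dots> = jt j" unfolding v'_def by (rule mod_fix[OF jtq])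
    finally have svy: "sv y = jt j" .
    have "y \<in> ?A" using yV adj Uy wf svy by simp
    then show "w \<in> Uw ` ?A" using Uy by blast
  qed
  have "card {y\<in>?V. ham_adj (q*n) x y \<and> gg y = j} = card ?B"
    unfolding AA using card_image[OF inj] img by simp
  also have "\<dots> = S (f (Uw x)) (jf j)"
    by (rule fcount[OF UwV[OF x]]) (simp add: jf_def)
  finally show ?thesis .
qed

lemma Dex: "u < q \<Longrightarrow> v < q \<Longrightarrow> \<exists>b. b \<in> ham_vertices q q \<and> \<phi> b = (u, v)"
proof -
  assume u: "u < q" and v: "v < q"
  let ?z = "\<lambda>_::nat. 0::nat"
  have zV: "?z \<in> ham_vertices q q" using qpos unfolding ham_vertices_def by auto
  show ?thesis
  proof (cases "u = fst (\<phi> ?z)")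
    case False then show ?thesis using P3[OF zV u v False] by blast
  next
    case True
    define u2 where "u2 = (if u = 0 then 1 else 0::nat)"
    have u2q: "u2 < q" and u2ne: "u2 \<noteq> u" using q2 unfolding u2_def by auto
    obtain y where y: "y \<in> ham_vertices q q" "\<phi> y = (u2, 0)"
      using P3[OF zV u2q qpos] u2ne True by blast
    have "u \<noteq> fst (\<phi> y)" using y(2) u2ne by simp
    then show ?thesis using P3[OF y(1) u v] by blast
  qed
qed

lemma coloring_exists:
  "perfect_coloring (q*n) q (2*q) gg
     (\<lambda>i j. if i \<le> q \<and> j \<le> q then S 1 1 else if i \<le> q \<and> q < j then S 1 2
            else if j \<le> q \<and> q < i then S 2 1 else S 2 2)"
  unfolding perfect_coloring_def
proof (intro conjI ballI)
  show "gg ` ham_vertices (q*n) q = {1..2*q}"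
  proof (intro equalityI subsetI)
    fix j assume "j \<in> gg ` ham_vertices (q*n) q"
    then show "j \<in> {1..2*q}" using gg_range by blast
  next
    fix j assume j: "j \<in> {1..2*q}"
    have jtq: "jt j < q" using j unfolding jt_def by auto
    have "jf j \<in> f ` ham_vertices n q" unfolding fim jf_def by simp
    then obtain w where w: "w \<in> ham_vertices n q" "f w = jf j" by (metis imageE)
    define B' where "B' = (\<lambda>k. SOME b. b \<in> ham_vertices q q \<and> \<phi> b = (w k, if k = 0 then jt j else 0))"
    have B'P: "\<And>k. k < n \<Longrightarrow> B' k \<in> ham_vertices q q \<and> \<phi> (B' k) = (w k, if k = 0 then jt j else 0)"
    proof -
      fix k assume k: "k < n"
      have wk: "w k < q" using w(1) k unfolding ham_vertices_def by simp
      have vk: "(if k = 0 then jt j else 0) < q" using jtq qpos by simp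
      show "B' k \<in> ham_vertices q q \<and> \<phi> (B' k) = (w k, if k = 0 then jt j else 0)"
        unfolding B'_def by (rule someI_ex[OF Dex[OF wk vk]])
    qed
    have B'V: "\<And>k. k < n \<Longrightarrow> B' k \<in> ham_vertices q q" using B'P by blast
    define y where "y = asm q n B'"
    have yV: "y \<in> ham_vertices (q*n) q" unfolding y_def by (rule asmV[OF B'V])
    have bY: "\<And>k. k < n \<Longrightarrow> blk q y k = B' k" unfolding y_def by (rule blk_asm[OF B'V])
    have Uy: "Uw y = w"
    proof
      fix k show "Uw y k = w k"
      proof (cases "k < n")
        case True then show ?thesis using bY[OF True] B'P[OF True] unfolding Uw_def by simp
      next
        case False then show ?thesis using w(1) unfolding Uw_def ham_vertices_def by simp
      qed
    qed
    have "(\<Sum>k<n. snd (\<phi> (blk q y k))) = (\<Sum>k<n. if k = 0 then jt j else 0)"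
      by (rule sum.cong) (use bY B'P in auto)
    also have "\<dots> = jt j" using n0 by (simp add: sum.delta')
    finally have "sv y = jt j" unfolding sv_def using jtq by simp
    then have "gg y = j" using gg_iff[OF yV j] Uy w(2) by simp
    then show "j \<in> gg ` ham_vertices (q*n) q" using yV by blast
  qed
next
  fix x j assume x: "x \<in> ham_vertices (q*n) q" and j: "j \<in> {1..2*q}"
  have c: "card {y\<in>ham_vertices (q*n) q. ham_adj (q*n) x y \<and> gg y = j} = S (f (Uw x)) (jf j)"
    by (rule count_main[OF x j])
  have fv: "f (Uw x) = 1 \<or> f (Uw x) = 2" using fval[OF UwV[OF x]] .
  show "card {y\<in>ham_vertices (q*n) q. ham_adj (q*n) x y \<and> gg y = j} =
     (if gg x \<le> q \<and> j \<le> q then S 1 1 else if gg x \<le> q \<and> q < j then S 1 2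
            else if j \<le> q \<and> q < gg x then S 2 1 else S 2 2)"
    unfolding c using fv sv_lt[of x] unfolding gg_def jf_def by auto
qed

end


lemma nondeg:
  assumes PF: "perfect_coloring n q 2 f S"
  shows "q \<ge> 2 \<and> n > 0"
proof (rule ccontr)
  assume h: "\<not> (q \<ge> 2 \<and> n > 0)"
  have "ham_vertices n q \<subseteq> {\<lambda>_. 0}"
  proof
    fix x assume x: "x \<in> ham_vertices n q"
    have "\<forall>i. x i = 0"
    proof
      fix i show "x i = 0"
      proof (cases "i < n")
        case True
        then have "n > 0" by simp
        then have "q < 2" using h by simp
        moreover have "x i < q" using x True unfolding ham_vertices_def by simp
        ultimately show ?thesis by simp
      next
        case False then show ?thesis using x unfolding ham_vertices_def by simp
      qed
    qed
    then have "x = (\<lambda>_. 0)" by (simp add: fun_eq_iff)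
    then show "x \<in> {\<lambda>_. 0}" by simp
  qed
  then have "f ` ham_vertices n q \<subseteq> {f (\<lambda>_. 0)}" by blast
  then have "{1..2::nat} \<subseteq> {f (\<lambda>_. 0)}" using PF unfolding perfect_coloring_def by simp
  moreover have "(1::nat) \<in> {1..2}" "(2::nat) \<in> {1..2}" by auto
  ultimately have "(1::nat) \<in> {f (\<lambda>_. 0)}" "(2::nat) \<in> {f (\<lambda>_. 0)}" by blast+
  then show False by simp
qed

theorem lemma8:
  fixes n q a b c d :: nat and f :: "(nat \<Rightarrow> nat) \<Rightarrow> nat" and S :: "nat \<Rightarrow> nat \<Rightarrow> nat"
  assumes "perfect_coloring n q 2 f S"
    and "S 1 1 = a" and "S 1 2 = b" and "S 2 1 = c" and "S 2 2 = d"
    and "\<exists>C. one_perfect_code (q + 1) q C"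
  shows "\<exists>g. perfect_coloring (q * n) q (2 * q) g
           (\<lambda>i j. if i \<le> q \<and> j \<le> q then a
                  else if i \<le> q \<and> q < j then b
                  else if j \<le> q \<and> q < i then c
                  else d)"
proof -
  have nd: "q \<ge> 2" "n > 0" using nondeg[OF assms(1)] by auto
  obtain C where C: "one_perfect_code (q+1) q C" using assms(6) by auto
  obtain \<phi> where P: "PhiProps q \<phi>" using phi_exists[OF nd(1) C] by blast
  have "perfect_coloring (q*n) q (2*q) (gg q n \<phi> f)
     (\<lambda>i j. if i \<le> q \<and> j \<le> q then S 1 1 else if i \<le> q \<and> q < j then S 1 2
            else if j \<le> q \<and> q < i then S 2 1 else S 2 2)"
    by (rule coloring_exists[OF nd(1) nd(2) P assms(1)])
  then show ?thesis unfolding assms(2-5) by blast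
qed

end
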